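(* Let $(\mathcal{A},v)$ be a valued abelian group and $A_1,\dots,A_n$ subgroups of $\mathcal{A}$ such that each $(A_i,v)$ is spherically complete. If the sum $A_1+\dots+A_n$ is pseudo-direct, then $(A_1+\dots+A_n,v)$ is spherically complete and has the optimal approximation property in $\mathcal{A}$: for every $z\in\mathcal{A}$ there is $y_0\in A_1+\dots+A_n$ with $v(z-y_0)=\max\{v(z-y)\mid y\in A_1+\dots+A_n\}$.
   Context: A valued abelian group $(G,v)$ is an abelian group with a map $v$ onto $vG\cup\{\infty\}$ ($vG$ totally ordered, $\infty$ maximal) with $va=\infty$ iff $a=0$ and $v(a-b)\ge\min\{va,vb\}$; subgroups carry the restricted $v$. It is spherically complete if in the ultrametric space $u(a,b)=v(a-b)$ every nest (family totally ordered by inclusion) of balls has non-empty intersection, balls being unions of non-empty collections of closed balls $\{x:v(x-c)\ge\alpha\}$ with a common element. The sum $A_1+\dots+A_n$ is pseudo-direct if for every nonzero $a'\in A_1+\dots+A_n$ there are $a_i\in A_i$ with $v\sum_{i=1}^na_i=\min_iva_i$ and $v(a'-\sum_{i=1}^na_i)>va'$. *)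

theory Defs
  imports Main
begin

definition valued_group :: "('a::ab_group_add \<Rightarrow> 'g::{linorder,order_top}) \<Rightarrow> bool" where
  "valued_group v \<longleftrightarrow> (\<forall>a. v a = top \<longleftrightarrow> a = 0) \<and> (\<forall>a b. min (v a) (v b) \<le> v (a - b))"

definition ab_subgroup :: "'a::ab_group_add set \<Rightarrow> bool" where
  "ab_subgroup A \<longleftrightarrow> 0 \<in> A \<and> (\<forall>a\<in>A. \<forall>b\<in>A. a - b \<in> A)"

text \<open>Closed ball in the ultrametric space (A, u), u(a,b) = v(a-b).\<close>
definition closed_ball_v :: "('a::ab_group_add \<Rightarrow> 'g::linorder) \<Rightarrow> 'a set \<Rightarrow> 'a \<Rightarrow> 'g \<Rightarrow> 'a set" where
  "closed_ball_v v A c \<alpha> = {x \<in> A. \<alpha> \<le> v (x - c)}"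

text \<open>Balls: unions of non-empty collections of closed balls having a common element;
radii range over the value set of the space (A,u), which is v ` A.\<close>
definition is_ball_v :: "('a::ab_group_add \<Rightarrow> 'g::linorder) \<Rightarrow> 'a set \<Rightarrow> 'a set \<Rightarrow> bool" where
  "is_ball_v v A B \<longleftrightarrow> (\<exists>\<C>. \<C> \<noteq> {} \<and>
      \<C> \<subseteq> {closed_ball_v v A c \<alpha> | c \<alpha>. c \<in> A \<and> \<alpha> \<in> v ` A} \<and>
      (\<exists>x. \<forall>C\<in>\<C>. x \<in> C) \<and> B = \<Union>\<C>)"

definition spherically_complete :: "('a::ab_group_add \<Rightarrow> 'g::linorder) \<Rightarrow> 'a set \<Rightarrow> bool" where
  "spherically_complete v A \<longleftrightarrow>
     (\<forall>\<N>. \<N> \<noteq> {} \<and> (\<forall>B\<in>\<N>. is_ball_v v A B) \<and> (\<forall>B1\<in>\<N>. \<forall>B2\<in>\<N>. B1 \<subseteq> B2 \<or> B2 \<subseteq> B1)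
          \<longrightarrow> \<Inter>\<N> \<noteq> {})"

definition sum_sets :: "(nat \<Rightarrow> 'a::ab_group_add set) \<Rightarrow> nat \<Rightarrow> 'a set" where
  "sum_sets A n = {(\<Sum>i<n. a i) | a. \<forall>i<n. a i \<in> A i}"

definition pseudo_direct :: "('a::ab_group_add \<Rightarrow> 'g::linorder) \<Rightarrow> (nat \<Rightarrow> 'a set) \<Rightarrow> nat \<Rightarrow> bool" where
  "pseudo_direct v A n \<longleftrightarrow>
     (\<forall>a'\<in>sum_sets A n. a' \<noteq> 0 \<longrightarrow>
        (\<exists>a. (\<forall>i<n. a i \<in> A i) \<and> v (\<Sum>i<n. a i) = (MIN i\<in>{..<n}. v (a i))
              \<and> v (a' - (\<Sum>i<n. a i)) > v a'))"

end

theory Submission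
  imports Defs
begin


definition upclosed :: "'g::linorder set \<Rightarrow> bool" where
  "upclosed U \<longleftrightarrow> (\<forall>\<alpha>\<in>U. \<forall>\<beta>. \<alpha> \<le> \<beta> \<longrightarrow> \<beta> \<in> U)"

definition gball :: "('a::ab_group_add \<Rightarrow> 'g::linorder) \<Rightarrow> 'a set \<Rightarrow> 'a \<Rightarrow> 'g set \<Rightarrow> 'a set" where
  "gball v A c U = {x\<in>A. v (x - c) \<in> U}"

definition Kb :: "(nat \<Rightarrow> 'a set) \<Rightarrow> nat \<Rightarrow> ('a::ab_group_add \<Rightarrow> 'g::linorder) \<Rightarrow> (nat \<Rightarrow> 'a) \<Rightarrow> 'g set \<Rightarrow> (nat \<Rightarrow> 'a) set" where
  "Kb A n v c U = {x. \<forall>i<n. x i \<in> A i \<and> v (x i - c i) \<in> U}"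

context
  fixes v :: "'a::ab_group_add \<Rightarrow> 'g::{linorder,order_top}"
  assumes vg: "valued_group v"
begin

lemma vg_zero: "v 0 = top"
  using vg unfolding valued_group_def by blast

lemma vg_sub: "min (v a) (v b) \<le> v (a - b)"
  using vg unfolding valued_group_def by blast

lemma vg_neg: "v (- a) = v a"
proof -
  have "v a \<le> v (-a)" using vg_sub[of 0 a] by (simp add: vg_zero)
  moreover have "v (-a) \<le> v a" using vg_sub[of 0 "-a"] by (simp add: vg_zero)
  ultimately show ?thesis by simp
qed

lemma vg_sym: "v (a - b) = v (b - a)"
  using vg_neg[of "a - b"] by simp

lemma vg_add: "min (v a) (v b) \<le> v (a + b)"
  using vg_sub[of a "-b"] by (simp add: vg_neg)

lemma vg_tri: "min (v (a - b)) (v (b - c)) \<le> v (a - c)"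
proof -
  have "min (v (a - b)) (v (c - b)) \<le> v ((a - b) - (c - b))" by (rule vg_sub)
  thus ?thesis by (simp add: vg_sym[of c b])
qed

lemma vg_eq: assumes "v x < v (x - y)" shows "v y = v x"
proof -
  have "min (v x) (v (x - y)) \<le> v (x - (x - y))" by (rule vg_sub)
  moreover have "min (v x) (v (x - y)) = v x" using assms by simp
  ultimately have 1: "v x \<le> v y" by simp
  have "min (v y) (v (x - y)) \<le> v (y + (x - y))" by (rule vg_add)
  hence "v y \<le> v x \<or> v (x - y) \<le> v x" by (simp add: min_le_iff_disj)
  hence "v y \<le> v x" using assms by auto
  with 1 show ?thesis by simp
qed

lemma up_min: assumes "upclosed U" "a \<in> U" "b \<in> U" "min a b \<le> c" shows "c \<in> U"
proof (cases "a \<le> b")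
  case True then have "a \<le> c" using assms(4) by (simp add: min_def)
  then show ?thesis using assms(1,2) unfolding upclosed_def by blast
next
  case False then have "b \<le> c" using assms(4) by (simp add: min_def)
  then show ?thesis using assms(1,3) unfolding upclosed_def by blast
qed

lemma up_top: "upclosed (U::'g set) \<Longrightarrow> U \<noteq> {} \<Longrightarrow> top \<in> U"
proof -
  assume a: "upclosed U" "U \<noteq> {}"
  then obtain a where "a \<in> U" by blast
  moreover have "a \<le> top" by (rule top_greatest)
  ultimately show "top \<in> U" using a(1) unfolding upclosed_def by blast
qed



lemma sum_U:
  fixes n :: nat
  assumes "upclosed U" "U \<noteq> {}" "\<forall>i<n. v (x i) \<in> U"
  shows "v (\<Sum>i<n. x i) \<in> U"
  using assms(3)
proof (induction n)
  case 0 then show ?case using up_top[OF assms(1,2)] by (simp add: vg_zero)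
next
  case (Suc n)
  have h1: "v (\<Sum>i<n. x i) \<in> U" using Suc by auto
  have h2: "v (x n) \<in> U" using Suc by auto
  have "v ((\<Sum>i<n. x i) + x n) \<in> U" by (rule up_min[OF assms(1) h1 h2 vg_add])
  moreover have "(\<Sum>i<Suc n. x i) = (\<Sum>i<n. x i) + x n" by simp
  ultimately show ?case by simp
qed


lemma gball_is_ball:
  assumes A: "ab_subgroup A" and c: "c \<in> A" and U: "upclosed U" "U \<noteq> {}"
  shows "is_ball_v v A (gball v A c U)"
proof -
  let ?C = "(\<lambda>x. closed_ball_v v A c (v (x - c))) ` gball v A c U"
  have top: "top \<in> U" by (rule up_top[OF U])
  have cin: "c \<in> gball v A c U" using c top by (simp add: gball_def vg_zero)
  have sub: "?C \<subseteq> {closed_ball_v v A c \<alpha> | c \<alpha>. c \<in> A \<and> \<alpha> \<in> v ` A}"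
  proof
    fix C assume "C \<in> ?C"
    then obtain x where x: "x \<in> gball v A c U" "C = closed_ball_v v A c (v (x - c))" by blast
    have "x - c \<in> A" using x(1) A c by (simp add: gball_def ab_subgroup_def)
    thus "C \<in> {closed_ball_v v A c \<alpha> | c \<alpha>. c \<in> A \<and> \<alpha> \<in> v ` A}" using x(2) c by blast
  qed
  have com: "\<forall>C\<in>?C. c \<in> C" using c by (auto simp: closed_ball_v_def vg_zero)
  have un: "gball v A c U = \<Union>?C"
  proof
    show "gball v A c U \<subseteq> \<Union>?C"
    proof
      fix x assume x: "x \<in> gball v A c U"
      hence "x \<in> closed_ball_v v A c (v (x - c))" by (simp add: gball_def closed_ball_v_def)
      thus "x \<in> \<Union>?C" using x by blast
    qed
    show "\<Union>?C \<subseteq> gball v A c U"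
    proof
      fix y assume "y \<in> \<Union>?C"
      then obtain x where x: "x \<in> gball v A c U" "y \<in> closed_ball_v v A c (v (x - c))" by blast
      hence y: "y \<in> A" "v (x - c) \<le> v (y - c)" "v (x - c) \<in> U" by (auto simp: closed_ball_v_def gball_def)
      hence "v (y - c) \<in> U" using U(1) unfolding upclosed_def by blast
      thus "y \<in> gball v A c U" using y by (simp add: gball_def)
    qed
  qed
  show ?thesis unfolding is_ball_v_def
    apply (rule exI[of _ ?C])
    using cin sub com un by blast
qed

lemma ball_rec:
  assumes B: "is_ball_v v S B"
  obtains x where "x \<in> B" "B \<subseteq> S"
    "\<And>u. u \<in> B \<Longrightarrow> \<exists>\<alpha>. \<alpha> \<le> v (u - x) \<and> (\<forall>y\<in>S. \<alpha> \<le> v (y - x) \<longrightarrow> y \<in> B)"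
proof -
  obtain \<C> x where C: "\<C> \<noteq> {}" "\<C> \<subseteq> {closed_ball_v v S c \<alpha> | c \<alpha>. c \<in> S \<and> \<alpha> \<in> v ` S}"
    "\<forall>C\<in>\<C>. x \<in> C" "B = \<Union>\<C>"
    using B unfolding is_ball_v_def by blast
  have xB: "x \<in> B" using C by blast
  have BS: "B \<subseteq> S" using C(2,4) by (auto simp: closed_ball_v_def)
  have "\<exists>\<alpha>. \<alpha> \<le> v (u - x) \<and> (\<forall>y\<in>S. \<alpha> \<le> v (y - x) \<longrightarrow> y \<in> B)" if u: "u \<in> B" for u
  proof -
    obtain C where CC: "C \<in> \<C>" "u \<in> C" using u C(4) by blast
    then obtain c' \<alpha> where ca: "C = closed_ball_v v S c' \<alpha>" using C(2) by blast
    have xC: "x \<in> C" using C(3) CC by blast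
    have 1: "\<alpha> \<le> v (u - c')" "\<alpha> \<le> v (x - c')" using CC(2) xC ca by (auto simp: closed_ball_v_def)
    have "min (v (u - c')) (v (c' - x)) \<le> v (u - x)" by (rule vg_tri)
    moreover have "v (c' - x) = v (x - c')" by (rule vg_sym)
    ultimately have a1: "\<alpha> \<le> v (u - x)" using 1 by (metis min.bounded_iff order.trans)
    have "\<forall>y\<in>S. \<alpha> \<le> v (y - x) \<longrightarrow> y \<in> B"
    proof (intro ballI impI)
      fix y assume y: "y \<in> S" "\<alpha> \<le> v (y - x)"
      have "min (v (y - x)) (v (x - c')) \<le> v (y - c')" by (rule vg_tri)
      hence "\<alpha> \<le> v (y - c')" using y(2) 1(2) by (metis min.bounded_iff order.trans)
      hence "y \<in> C" using y(1) ca by (simp add: closed_ball_v_def)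
      thus "y \<in> B" using CC(1) C(4) by blast
    qed
    thus ?thesis using a1 by blast
  qed
  then show ?thesis using that xB BS by blast
qed

lemma ball_prop:
  assumes B: "is_ball_v v S B"
  shows "B \<subseteq> S" "B \<noteq> {}"
    "\<And>a b c y. a \<in> B \<Longrightarrow> b \<in> B \<Longrightarrow> c \<in> B \<Longrightarrow> y \<in> S \<Longrightarrow> v (a - b) \<le> v (y - c) \<Longrightarrow> y \<in> B"
proof -
  obtain x where x: "x \<in> B" "B \<subseteq> S"
    "\<And>u. u \<in> B \<Longrightarrow> \<exists>\<alpha>. \<alpha> \<le> v (u - x) \<and> (\<forall>y\<in>S. \<alpha> \<le> v (y - x) \<longrightarrow> y \<in> B)"
    using ball_rec[OF B] by blast
  show "B \<subseteq> S" "B \<noteq> {}" using x by auto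
  fix a b c y assume h: "a \<in> B" "b \<in> B" "c \<in> B" "y \<in> S" "v (a - b) \<le> v (y - c)"
  obtain \<alpha>a where a: "\<alpha>a \<le> v (a - x)" "\<forall>y\<in>S. \<alpha>a \<le> v (y - x) \<longrightarrow> y \<in> B" using x(3) h(1) by blast
  obtain \<alpha>b where b: "\<alpha>b \<le> v (b - x)" "\<forall>y\<in>S. \<alpha>b \<le> v (y - x) \<longrightarrow> y \<in> B" using x(3) h(2) by blast
  obtain \<alpha>c where c: "\<alpha>c \<le> v (c - x)" "\<forall>y\<in>S. \<alpha>c \<le> v (y - x) \<longrightarrow> y \<in> B" using x(3) h(3) by blast
  have "min (v (a - x)) (v (x - b)) \<le> v (a - b)" by (rule vg_tri)
  moreover have "v (x - b) = v (b - x)" by (rule vg_sym)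
  ultimately have 1: "min \<alpha>a \<alpha>b \<le> v (a - b)" using a(1) b(1) by (metis min.mono order.trans)
  have "min (v (y - c)) (v (c - x)) \<le> v (y - x)" by (rule vg_tri)
  hence 2: "min (min \<alpha>a \<alpha>b) \<alpha>c \<le> v (y - x)" using 1 h(5) c(1) by (metis min.mono order.trans)
  hence "\<alpha>a \<le> v (y - x) \<or> \<alpha>b \<le> v (y - x) \<or> \<alpha>c \<le> v (y - x)" by (simp add: min_le_iff_disj)
  thus "y \<in> B" using a(2) b(2) c(2) h(4) by blast
qed


lemma subg_diff: "ab_subgroup A \<Longrightarrow> a \<in> A \<Longrightarrow> b \<in> A \<Longrightarrow> a - b \<in> A"
  unfolding ab_subgroup_def by blast
lemma subg_zero: "ab_subgroup A \<Longrightarrow> 0 \<in> A"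
  unfolding ab_subgroup_def by blast
lemma subg_neg: assumes "ab_subgroup A" "a \<in> A" shows "- a \<in> A"
proof -
  have "0 - a \<in> A" by (rule subg_diff[OF assms(1) subg_zero[OF assms(1)] assms(2)])
  thus ?thesis by simp
qed
lemma subg_add: assumes "ab_subgroup A" "a \<in> A" "b \<in> A" shows "a + b \<in> A"
proof -
  have "a - (- b) \<in> A" by (rule subg_diff[OF assms(1,2) subg_neg[OF assms(1,3)]])
  thus ?thesis by simp
qed

lemma sum_sets_iff: "y \<in> sum_sets A n \<longleftrightarrow> (\<exists>a. (\<forall>i<n. a i \<in> A i) \<and> y = (\<Sum>i<n. a i))"
  unfolding sum_sets_def by auto

lemma sum_sets_diff:
  assumes "\<forall>i<n. ab_subgroup (A i)" "x \<in> sum_sets A n" "y \<in> sum_sets A n"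
  shows "x - y \<in> sum_sets A n"
proof -
  obtain a b where a: "\<forall>i<n. a i \<in> A i" "x = (\<Sum>i<n. a i)" and b: "\<forall>i<n. b i \<in> A i" "y = (\<Sum>i<n. b i)"
    using assms(2,3) unfolding sum_sets_iff by blast
  have "\<forall>i<n. a i - b i \<in> A i"
  proof (intro allI impI)
    fix i assume i: "i < n"
    show "a i - b i \<in> A i" using subg_diff[of "A i" "a i" "b i"] i a(1) b(1) assms(1) by blast
  qed
  moreover have "x - y = (\<Sum>i<n. a i - b i)" unfolding a(2) b(2) by (rule sum_subtractf[symmetric])
  ultimately show ?thesis unfolding sum_sets_iff by (intro exI[of _ "\<lambda>i. a i - b i"]) simp
qed

lemma maxchain_chain: "subset.maxchain F M \<Longrightarrow> M \<subseteq> F \<and> (\<forall>K1\<in>M. \<forall>K2\<in>M. K1 \<subseteq> K2 \<or> K2 \<subseteq> K1)"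
  unfolding subset.maxchain_def subset.chain_def by blast

lemma maxchain_ext:
  assumes "subset.maxchain F M" "K \<in> F" "\<forall>L\<in>M. K \<subseteq> L"
  shows "K \<in> M"
proof (rule ccontr)
  assume "K \<notin> M"
  have "subset.chain F (insert K M)"
    using assms maxchain_chain[OF assms(1)] unfolding subset.chain_def by blast
  moreover have "M \<subset> insert K M" using \<open>K \<notin> M\<close> by blast
  ultimately show False using assms(1) unfolding subset.maxchain_def by blast
qed

lemma Kb_proj:
  assumes "i < n" "\<forall>j<n. c j \<in> A j" "upclosed U" "U \<noteq> {}"
  shows "(\<lambda>x. x i) ` Kb A n v c U = gball v (A i) (c i) U"
proof
  show "(\<lambda>x. x i) ` Kb A n v c U \<subseteq> gball v (A i) (c i) U"
    using assms(1) by (auto simp: Kb_def gball_def)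
  show "gball v (A i) (c i) U \<subseteq> (\<lambda>x. x i) ` Kb A n v c U"
  proof
    fix a assume a: "a \<in> gball v (A i) (c i) U"
    have top: "top \<in> U" by (rule up_top[OF assms(3,4)])
    have "c(i := a) \<in> Kb A n v c U"
      using a assms(2) top by (auto simp: Kb_def gball_def vg_zero)
    moreover have "a = (c(i := a)) i" by simp
    ultimately show "a \<in> (\<lambda>x. x i) ` Kb A n v c U" by blast
  qed
qed

lemma PC:
  assumes sub: "\<forall>i<n. ab_subgroup (A i)" and sc: "\<forall>i<n. spherically_complete v (A i)"
    and M: "M \<noteq> {}" "\<forall>K1\<in>M. \<forall>K2\<in>M. K1 \<subseteq> K2 \<or> K2 \<subseteq> K1"
    and rep: "\<forall>K\<in>M. \<exists>c U. (\<forall>i<n. c i \<in> A i) \<and> upclosed U \<and> U \<noteq> {} \<and> K = Kb A n v c U"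
  shows "\<exists>q. \<forall>K\<in>M. q \<in> K"
proof -
  have "\<exists>a. \<forall>K\<in>M. a \<in> (\<lambda>x. x i) ` K" if i: "i < n" for i
  proof -
    let ?N = "(\<lambda>K. (\<lambda>x. x i) ` K) ` M"
    have "?N \<noteq> {}" using M by blast
    moreover have "\<forall>B\<in>?N. is_ball_v v (A i) B"
    proof
      fix B assume "B \<in> ?N"
      then obtain K where K: "K \<in> M" "B = (\<lambda>x. x i) ` K" by blast
      then obtain c U where cU: "\<forall>i<n. c i \<in> A i" "upclosed U" "U \<noteq> {}" "K = Kb A n v c U"
        using rep[rule_format, OF K(1)] by blast
      have "B = gball v (A i) (c i) U" using K(2) cU(4) Kb_proj[OF i cU(1-3)] by simp
      moreover have "is_ball_v v (A i) (gball v (A i) (c i) U)"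
        using gball_is_ball[of "A i" "c i" U] sub i cU(1-3) by blast
      ultimately show "is_ball_v v (A i) B" by simp
    qed
    moreover have "\<forall>B1\<in>?N. \<forall>B2\<in>?N. B1 \<subseteq> B2 \<or> B2 \<subseteq> B1"
    proof (intro ballI)
      fix B1 B2 assume "B1 \<in> ?N" "B2 \<in> ?N"
      then obtain K1 K2 where "K1 \<in> M" "K2 \<in> M" "B1 = (\<lambda>x. x i) ` K1" "B2 = (\<lambda>x. x i) ` K2" by blast
      moreover have "K1 \<subseteq> K2 \<or> K2 \<subseteq> K1" using M(2) \<open>K1 \<in> M\<close> \<open>K2 \<in> M\<close> by blast
      ultimately show "B1 \<subseteq> B2 \<or> B2 \<subseteq> B1" by (auto simp: image_mono)
    qed
    moreover have "spherically_complete v (A i)" using sc i by blast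
    ultimately have "\<Inter>?N \<noteq> {}" unfolding spherically_complete_def by (elim allE[of _ ?N] impE) (intro conjI)
    thus ?thesis by blast
  qed
  hence "\<forall>i. \<exists>a. i < n \<longrightarrow> (\<forall>K\<in>M. a \<in> (\<lambda>x. x i) ` K)" by auto
  from choice[OF this] obtain f where f0: "\<forall>i. i < n \<longrightarrow> (\<forall>K\<in>M. f i \<in> (\<lambda>x. x i) ` K)" by blast
  hence f: "\<And>i. i < n \<Longrightarrow> \<forall>K\<in>M. f i \<in> (\<lambda>x. x i) ` K" by blast
  have "f \<in> K" if K: "K \<in> M" for K
  proof -
    obtain c U where cU: "\<forall>i<n. c i \<in> A i" "upclosed U" "U \<noteq> {}" "K = Kb A n v c U"
      using rep[rule_format, OF K] by blast
    have "\<forall>i<n. f i \<in> gball v (A i) (c i) U"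
    proof (intro allI impI)
      fix i assume i: "i < n"
      have "f i \<in> (\<lambda>x. x i) ` K" using f[OF i] K by blast
      thus "f i \<in> gball v (A i) (c i) U" using Kb_proj[OF i cU(1-3)] cU(4) by simp
    qed
    thus ?thesis using cU(4) by (auto simp: Kb_def gball_def)
  qed
  thus ?thesis by blast
qed


lemma lift:
  fixes n :: nat and A :: "nat \<Rightarrow> 'a set"
  assumes sub: "\<forall>i<n. ab_subgroup (A i)" and sc: "\<forall>i<n. spherically_complete v (A i)"
    and pd: "pseudo_direct v A n" and s: "s \<in> sum_sets A n"
  shows "\<exists>d. (\<forall>i<n. d i \<in> A i) \<and> (\<Sum>i<n. d i) = s \<and> (\<forall>i<n. v s \<le> v (d i))"
proof -
  define e where "e p = v (s - (\<Sum>i<n. p i))" for p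
  define G where "G p \<longleftrightarrow> (\<forall>i<n. p i \<in> A i) \<and> v s \<le> e p \<and> (\<forall>i<n. v s \<le> v (p i))" for p
  define KK where "KK p = Kb A n v p {\<alpha>. e p \<le> \<alpha>}" for p
  define F where "F = KK ` Collect G"
  obtain M where M: "subset.maxchain F M" using subset.Hausdorff by blast
  have MF: "M \<subseteq> F" and Mch: "\<forall>K1\<in>M. \<forall>K2\<in>M. K1 \<subseteq> K2 \<or> K2 \<subseteq> K1"
    using maxchain_chain[OF M] by auto
  have upc: "upclosed {\<alpha>. e p \<le> \<alpha>}" for p unfolding upclosed_def by auto
  have une: "{\<alpha>. e p \<le> \<alpha>} \<noteq> {}" for p by auto
  have inF: "KK p \<in> F" if "G p" for p unfolding F_def using that by blast
  have inF': "\<exists>p. G p \<and> K = KK p" if "K \<in> M" for K using that MF unfolding F_def by blast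
  have G0: "G (\<lambda>_. 0)" unfolding G_def e_def using sub by (simp add: subg_zero vg_zero)
  have Mne: "M \<noteq> {}"
  proof
    assume M0: "M = {}"
    have "KK (\<lambda>_. 0) \<in> M" by (rule maxchain_ext[OF M inF[OF G0]]) (simp add: M0)
    thus False using M0 by simp
  qed
  have rep: "\<forall>K\<in>M. \<exists>c U. (\<forall>i<n. c i \<in> A i) \<and> upclosed U \<and> U \<noteq> {} \<and> K = Kb A n v c U"
  proof
    fix K assume "K \<in> M"
    then obtain p where p: "G p" "K = KK p" using inF' by blast
    have "(\<forall>i<n. p i \<in> A i) \<and> upclosed {\<alpha>. e p \<le> \<alpha>} \<and> {\<alpha>. e p \<le> \<alpha>} \<noteq> {} \<and> K = Kb A n v p {\<alpha>. e p \<le> \<alpha>}"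
      using p upc une unfolding G_def KK_def by blast
    thus "\<exists>c U. (\<forall>i<n. c i \<in> A i) \<and> upclosed U \<and> U \<noteq> {} \<and> K = Kb A n v c U" by blast
  qed
  obtain q where q: "\<forall>K\<in>M. q \<in> K" using PC[OF sub sc Mne Mch rep] by blast
  have qK: "q \<in> KK p" if "KK p \<in> M" for p using q that by blast
  have memKK: "y \<in> KK p \<longleftrightarrow> (\<forall>i<n. y i \<in> A i \<and> e p \<le> v (y i - p i))" for y p
    by (simp add: KK_def Kb_def)
  obtain p1 where p1: "G p1" "KK p1 \<in> M"
  proof -
    obtain K where "K \<in> M" using Mne by blast
    then obtain p where "G p" "K = KK p" using inF' by blast
    thus ?thesis using that \<open>K \<in> M\<close> by blast
  qed
  have qA: "\<forall>i<n. q i \<in> A i" using qK[OF p1(2)] memKK by blast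
  have qv: "\<forall>i<n. v s \<le> v (q i)"
  proof (intro allI impI)
    fix i assume i: "i < n"
    have a: "v s \<le> e p1" "v s \<le> v (p1 i)" using p1(1) i unfolding G_def by auto
    have b: "e p1 \<le> v (q i - p1 i)" using qK[OF p1(2)] memKK i by blast
    have m: "min (v (q i - p1 i)) (v (p1 i)) \<le> v (q i)" using vg_add[of "q i - p1 i" "p1 i"] by simp
    have "v s \<le> min (v (q i - p1 i)) (v (p1 i))" using a b by simp
    from this m show "v s \<le> v (q i)" by (rule order.trans)
  qed
  have eq_ge: "e p \<le> e q" if pM: "KK p \<in> M" for p
  proof -
    have h: "\<forall>i<n. v (q i - p i) \<in> {\<alpha>. e p \<le> \<alpha>}" using qK[OF pM] memKK by blast
    have "v (\<Sum>i<n. q i - p i) \<in> {\<alpha>. e p \<le> \<alpha>}" by (rule sum_U[OF upc une h])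
    hence 1: "e p \<le> v ((\<Sum>i<n. q i) - (\<Sum>i<n. p i))" by (simp add: sum_subtractf)
    have "min (v (s - (\<Sum>i<n. p i))) (v ((\<Sum>i<n. q i) - (\<Sum>i<n. p i)))
          \<le> v ((s - (\<Sum>i<n. p i)) - ((\<Sum>i<n. q i) - (\<Sum>i<n. p i)))" by (rule vg_sub)
    hence "min (e p) (v ((\<Sum>i<n. q i) - (\<Sum>i<n. p i))) \<le> e q" by (simp add: e_def)
    thus ?thesis using 1 by (simp add: min.absorb1)
  qed
  have eq_vs: "v s \<le> e q" using eq_ge[OF p1(2)] p1(1) unfolding G_def by auto
  have Gq: "G q" using qA eq_vs qv unfolding G_def by auto
  have sub_q: "KK q \<subseteq> K" if KM: "K \<in> M" for K
  proof
    obtain p where p: "G p" "K = KK p" using inF'[OF KM] by blast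
    have pM: "KK p \<in> M" using KM p(2) by simp
    fix y assume y: "y \<in> KK q"
    have "\<forall>i<n. y i \<in> A i \<and> e p \<le> v (y i - p i)"
    proof (intro allI impI conjI)
      fix i assume i: "i < n"
      show "y i \<in> A i" using y memKK i by blast
      have a: "e q \<le> v (y i - q i)" using y memKK i by blast
      have b: "e p \<le> v (q i - p i)" using qK[OF pM] memKK i by blast
      have c: "e p \<le> e q" by (rule eq_ge[OF pM])
      have m: "min (v (y i - q i)) (v (q i - p i)) \<le> v (y i - p i)" by (rule vg_tri)
      have "e p \<le> min (v (y i - q i)) (v (q i - p i))" using a b c by simp
      from this m show "e p \<le> v (y i - p i)" by (rule order.trans)
    qed
    thus "y \<in> K" unfolding p(2) memKK .
  qed
  have KqM: "KK q \<in> M" by (rule maxchain_ext[OF M inF[OF Gq]]) (use sub_q in blast)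
  show ?thesis
  proof (cases "e q = top")
    case True
    hence "s - (\<Sum>i<n. q i) = 0" using vg unfolding e_def valued_group_def by blast
    hence "(\<Sum>i<n. q i) = s" by simp
    thus ?thesis using qA qv by blast
  next
    case False
    define x where "x = s - (\<Sum>i<n. q i)"
    have "(\<Sum>i<n. q i) \<in> sum_sets A n" unfolding sum_sets_iff using qA by blast
    hence xS: "x \<in> sum_sets A n" unfolding x_def by (rule sum_sets_diff[OF sub s])
    have vx: "v x = e q" by (simp add: x_def e_def)
    have xne: "x \<noteq> 0" using False vx vg_zero by auto
    obtain r where r: "\<forall>i<n. r i \<in> A i" "v (\<Sum>i<n. r i) = (MIN i\<in>{..<n}. v (r i))"
        "v x < v (x - (\<Sum>i<n. r i))"
      using pd xS xne unfolding pseudo_direct_def by blast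
    have vr: "v (\<Sum>i<n. r i) = e q" using vg_eq[OF r(3)] vx by simp
    have rge: "\<forall>i<n. e q \<le> v (r i)"
    proof (intro allI impI)
      fix i assume i: "i < n"
      have "Min ((\<lambda>i. v (r i)) ` {..<n}) \<le> v (r i)" by (rule Min_le) (use i in auto)
      thus "e q \<le> v (r i)" using r(2) vr by simp
    qed
    define q' where "q' = (\<lambda>i. q i + r i)"
    have q'A: "\<forall>i<n. q' i \<in> A i" unfolding q'_def using qA r(1) sub subg_add by blast
    have sq': "(\<Sum>i<n. q' i) = (\<Sum>i<n. q i) + (\<Sum>i<n. r i)" by (simp add: q'_def sum.distrib)
    have eq': "e q' = v (x - (\<Sum>i<n. r i))" by (simp add: e_def x_def sq' diff_diff_eq)
    have gt: "e q < e q'" using r(3) eq' vx by simp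
    have q'v: "\<forall>i<n. v s \<le> v (q' i)"
    proof (intro allI impI)
      fix i assume i: "i < n"
      have m: "min (v (q i)) (v (r i)) \<le> v (q' i)" unfolding q'_def by (rule vg_add)
      have "v s \<le> v (r i)" using rge eq_vs i by (auto intro: order.trans)
      hence "v s \<le> min (v (q i)) (v (r i))" using qv i by simp
      from this m show "v s \<le> v (q' i)" by (rule order.trans)
    qed
    have Gq': "G q'" using q'A gt eq_vs q'v unfolding G_def by auto
    have sub': "KK q' \<subseteq> KK q"
    proof
      fix y assume y: "y \<in> KK q'"
      have "\<forall>i<n. y i \<in> A i \<and> e q \<le> v (y i - q i)"
      proof (intro allI impI conjI)
        fix i assume i: "i < n"
        show "y i \<in> A i" using y memKK i by blast
        have a: "e q' \<le> v (y i - q' i)" using y memKK i by blast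
        have b: "e q \<le> v (q' i - q i)" using rge i by (simp add: q'_def)
        have m: "min (v (y i - q' i)) (v (q' i - q i)) \<le> v (y i - q i)" by (rule vg_tri)
        have "e q \<le> min (v (y i - q' i)) (v (q' i - q i))" using a b gt by simp
        from this m show "e q \<le> v (y i - q i)" by (rule order.trans)
      qed
      thus "y \<in> KK q" unfolding memKK .
    qed
    have "KK q' \<in> M" by (rule maxchain_ext[OF M inF[OF Gq']]) (use sub' sub_q in blast)
    hence "q \<in> KK q'" by (rule qK)
    hence "\<forall>i<n. v (r i) \<in> {\<alpha>. e q' \<le> \<alpha>}"
    proof -
      assume h: "q \<in> KK q'"
      show ?thesis
      proof (intro allI impI)
        fix i assume i: "i < n"
        have "e q' \<le> v (q i - q' i)" using h memKK i by blast
        moreover have "v (q i - q' i) = v (r i)" by (simp add: q'_def vg_neg)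
        ultimately show "v (r i) \<in> {\<alpha>. e q' \<le> \<alpha>}" by simp
      qed
    qed
    hence "v (\<Sum>i<n. r i) \<in> {\<alpha>. e q' \<le> \<alpha>}" by (rule sum_U[OF upc une])
    thus ?thesis using vr gt by simp
  qed
qed


lemma sum_sets_sub:
  assumes "\<forall>i<n. ab_subgroup (A i)"
  shows "ab_subgroup (sum_sets A n)"
proof -
  have "0 \<in> sum_sets A n" unfolding sum_sets_iff
    using assms subg_zero by (intro exI[of _ "\<lambda>_. 0"]) auto
  thus ?thesis unfolding ab_subgroup_def using sum_sets_diff[OF assms] by blast
qed

lemma opt_approx:
  assumes S: "ab_subgroup S" and sc: "spherically_complete v S"
  shows "\<exists>y0\<in>S. \<forall>y\<in>S. v (z - y) \<le> v (z - y0)"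
proof -
  define Bz where "Bz y = {x\<in>S. v (z - y) \<le> v (z - x)}" for y
  let ?N = "Bz ` S"
  have eq: "Bz y = gball v S y {\<alpha>. v (z - y) \<le> \<alpha>}" for y
  proof -
    have "v (z - y) \<le> v (z - x) \<longleftrightarrow> v (z - y) \<le> v (x - y)" for x
    proof
      assume h: "v (z - y) \<le> v (z - x)"
      have "min (v (x - z)) (v (z - y)) \<le> v (x - y)" by (rule vg_tri)
      moreover have "v (x - z) = v (z - x)" by (rule vg_sym)
      ultimately show "v (z - y) \<le> v (x - y)" using h by (simp add: min_def split: if_splits)
    next
      assume h: "v (z - y) \<le> v (x - y)"
      have "min (v (z - y)) (v (y - x)) \<le> v (z - x)" by (rule vg_tri)
      moreover have "v (y - x) = v (x - y)" by (rule vg_sym)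
      ultimately show "v (z - y) \<le> v (z - x)" using h by (simp add: min_def split: if_splits)
    qed
    thus ?thesis unfolding Bz_def gball_def by blast
  qed
  have "0 \<in> S" using S subg_zero by blast
  hence "?N \<noteq> {}" by blast
  moreover have "\<forall>B\<in>?N. is_ball_v v S B"
  proof
    fix B assume "B \<in> ?N"
    then obtain y where y: "y \<in> S" "B = Bz y" by blast
    have "upclosed {\<alpha>. v (z - y) \<le> \<alpha>}" unfolding upclosed_def by auto
    moreover have "{\<alpha>. v (z - y) \<le> \<alpha>} \<noteq> {}" by auto
    ultimately have "is_ball_v v S (gball v S y {\<alpha>. v (z - y) \<le> \<alpha>})"
      using gball_is_ball[OF S y(1)] by blast
    thus "is_ball_v v S B" using y(2) eq by simp
  qed
  moreover have "\<forall>B1\<in>?N. \<forall>B2\<in>?N. B1 \<subseteq> B2 \<or> B2 \<subseteq> B1"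
  proof (intro ballI)
    fix B1 B2 assume "B1 \<in> ?N" "B2 \<in> ?N"
    then obtain y1 y2 where "B1 = Bz y1" "B2 = Bz y2" by blast
    moreover have "Bz y1 \<subseteq> Bz y2 \<or> Bz y2 \<subseteq> Bz y1"
    proof (cases "v (z - y1) \<le> v (z - y2)")
      case True then show ?thesis unfolding Bz_def by (auto intro: order.trans)
    next
      case False then show ?thesis unfolding Bz_def by (auto intro: order.trans)
    qed
    ultimately show "B1 \<subseteq> B2 \<or> B2 \<subseteq> B1" by simp
  qed
  ultimately have "\<Inter>?N \<noteq> {}" using sc unfolding spherically_complete_def by (elim allE[of _ ?N] impE) (intro conjI)
  then obtain x where x: "\<forall>y\<in>S. x \<in> Bz y" by blast
  have "x \<in> S" using x \<open>0 \<in> S\<close> unfolding Bz_def by blast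
  moreover have "\<forall>y\<in>S. v (z - y) \<le> v (z - x)" using x unfolding Bz_def by blast
  ultimately show ?thesis by blast
qed


lemma main_sc:
  fixes n :: nat and A :: "nat \<Rightarrow> 'a set"
  assumes sub: "\<forall>i<n. ab_subgroup (A i)" and sc: "\<forall>i<n. spherically_complete v (A i)"
    and pd: "pseudo_direct v A n"
  shows "spherically_complete v (sum_sets A n)"
  unfolding spherically_complete_def
proof (intro allI impI)
  fix \<N> assume H: "\<N> \<noteq> {} \<and> (\<forall>B\<in>\<N>. is_ball_v v (sum_sets A n) B) \<and> (\<forall>B1\<in>\<N>. \<forall>B2\<in>\<N>. B1 \<subseteq> B2 \<or> B2 \<subseteq> B1)"
  let ?S = "sum_sets A n"
  have Nne: "\<N> \<noteq> {}" and Nb: "\<And>B. B \<in> \<N> \<Longrightarrow> is_ball_v v ?S B"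
    and Nch: "\<And>B1 B2. B1 \<in> \<N> \<Longrightarrow> B2 \<in> \<N> \<Longrightarrow> B1 \<subseteq> B2 \<or> B2 \<subseteq> B1" using H by auto
  define phi where "phi p = (\<Sum>i<n. p i)" for p :: "nat \<Rightarrow> 'a"
  define UB where "UB B = {\<alpha>. \<exists>a\<in>B. \<exists>b\<in>B. v (a - b) \<le> \<alpha>}" for B
  define F where "F = {Kb A n v p (UB B) | p B. B \<in> \<N> \<and> (\<forall>i<n. p i \<in> A i) \<and> phi p \<in> B}"
  have bS: "B \<subseteq> ?S" if "B \<in> \<N>" for B using ball_prop(1)[OF Nb[OF that]] .
  have bne: "B \<noteq> {}" if "B \<in> \<N>" for B using ball_prop(2)[OF Nb[OF that]] .
  have upUB: "upclosed (UB B)" for B unfolding upclosed_def UB_def by (blast intro: order.trans)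
  have UBne: "UB B \<noteq> {}" if ne: "B \<noteq> {}" for B
  proof -
    obtain a where "a \<in> B" using ne by blast
    hence "v (a - a) \<in> UB B" unfolding UB_def by blast
    thus ?thesis by blast
  qed
  have UBmono: "UB B \<subseteq> UB B'" if "B \<subseteq> B'" for B B' using that unfolding UB_def by blast
  have UBin: "v (a - b) \<in> UB B" if "a \<in> B" "b \<in> B" for a b B using that unfolding UB_def by blast
  have inB: "y \<in> B" if h: "B \<in> \<N>" "c \<in> B" "y \<in> ?S" "v (y - c) \<in> UB B" for B c y
  proof -
    obtain a b where "a \<in> B" "b \<in> B" "v (a - b) \<le> v (y - c)" using h(4) unfolding UB_def by blast
    thus ?thesis using ball_prop(3)[OF Nb[OF h(1)]] h(2,3) by blast
  qed
  have memK: "y \<in> Kb A n v p U \<longleftrightarrow> (\<forall>i<n. y i \<in> A i \<and> v (y i - p i) \<in> U)" for y p U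
    by (simp add: Kb_def)
  have phiS: "phi p \<in> ?S" if "\<forall>i<n. p i \<in> A i" for p
    unfolding sum_sets_iff phi_def using that by blast
  have phi_diff: "phi p - phi p' = phi (\<lambda>i. p i - p' i)" for p p'
    unfolding phi_def by (simp add: sum_subtractf)
  have inF: "Kb A n v p (UB B) \<in> F" if "B \<in> \<N>" "\<forall>i<n. p i \<in> A i" "phi p \<in> B" for p B
    unfolding F_def using that by blast
  obtain M where M: "subset.maxchain F M" using subset.Hausdorff by blast
  have MF: "M \<subseteq> F" and Mch: "\<forall>K1\<in>M. \<forall>K2\<in>M. K1 \<subseteq> K2 \<or> K2 \<subseteq> K1"
    using maxchain_chain[OF M] by auto
  have inM: "\<exists>p B. B \<in> \<N> \<and> (\<forall>i<n. p i \<in> A i) \<and> phi p \<in> B \<and> K = Kb A n v p (UB B)" if "K \<in> M" for K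
    using that MF unfolding F_def by blast
  have Mne: "M \<noteq> {}"
  proof
    assume M0: "M = {}"
    obtain B0 where B0: "B0 \<in> \<N>" using Nne by blast
    then obtain y0 where y0: "y0 \<in> B0" using bne by blast
    hence "y0 \<in> ?S" using bS B0 by blast
    then obtain p0 where p0: "\<forall>i<n. p0 i \<in> A i" "y0 = (\<Sum>i<n. p0 i)" unfolding sum_sets_iff by blast
    have "phi p0 \<in> B0" using p0(2) y0 by (simp add: phi_def)
    hence "Kb A n v p0 (UB B0) \<in> M" by (intro maxchain_ext[OF M inF[OF B0 p0(1)]]) (simp_all add: M0)
    thus False using M0 by simp
  qed
  have rep: "\<forall>K\<in>M. \<exists>c U. (\<forall>i<n. c i \<in> A i) \<and> upclosed U \<and> U \<noteq> {} \<and> K = Kb A n v c U"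
  proof
    fix K assume "K \<in> M"
    then obtain p B where pB: "B \<in> \<N>" "\<forall>i<n. p i \<in> A i" "phi p \<in> B" "K = Kb A n v p (UB B)"
      using inM by blast
    have "(\<forall>i<n. p i \<in> A i) \<and> upclosed (UB B) \<and> UB B \<noteq> {} \<and> K = Kb A n v p (UB B)"
      using pB upUB UBne bne by blast
    thus "\<exists>c U. (\<forall>i<n. c i \<in> A i) \<and> upclosed U \<and> U \<noteq> {} \<and> K = Kb A n v c U" by blast
  qed
  obtain q where q: "\<forall>K\<in>M. q \<in> K" using PC[OF sub sc Mne Mch rep] by blast
  have qA: "\<forall>i<n. q i \<in> A i"
  proof -
    obtain K where "K \<in> M" using Mne by blast
    then obtain p B where "K = Kb A n v p (UB B)" using inM by blast
    thus ?thesis using q \<open>K \<in> M\<close> memK by blast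
  qed
  have phq: "phi q \<in> B" if "B \<in> \<N>" "\<forall>i<n. p i \<in> A i" "phi p \<in> B" "Kb A n v p (UB B) \<in> M" for p B
  proof -
    have h: "\<forall>i<n. v (q i - p i) \<in> UB B" using q that(4) memK by blast
    have "v (\<Sum>i<n. q i - p i) \<in> UB B" by (rule sum_U[OF upUB UBne[OF bne[OF that(1)]] h])
    hence "v (phi q - phi p) \<in> UB B" unfolding phi_diff by (simp add: phi_def)
    thus ?thesis using inB[OF that(1) that(3) phiS[OF qA]] by blast
  qed
  have "phi q \<in> B" if BN: "B \<in> \<N>" for B
  proof (rule ccontr)
    assume nB: "phi q \<notin> B"
    obtain y where y: "y \<in> B" using bne[OF BN] by blast
    have yS: "y \<in> ?S" using bS[OF BN] y by blast
    have "y - phi q \<in> ?S" by (rule sum_sets_diff[OF sub yS phiS[OF qA]])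
    then obtain d where d: "\<forall>i<n. d i \<in> A i" "(\<Sum>i<n. d i) = y - phi q" "\<forall>i<n. v (y - phi q) \<le> v (d i)"
      using lift[OF sub sc pd] by blast
    define p' where "p' = (\<lambda>i. q i + d i)"
    have p'A: "\<forall>i<n. p' i \<in> A i" unfolding p'_def using qA d(1) sub subg_add by blast
    have php': "phi p' = y" unfolding phi_def p'_def using d(2) by (simp add: sum.distrib phi_def)
    have K'F: "Kb A n v p' (UB B) \<in> F" using inF[OF BN p'A] php' y by simp
    have K'sub: "Kb A n v p' (UB B) \<subseteq> K" if KM: "K \<in> M" for K
    proof
      obtain p B' where pB: "B' \<in> \<N>" "\<forall>i<n. p i \<in> A i" "phi p \<in> B'" "K = Kb A n v p (UB B')"
        using inM[OF KM] by blast
      have qB': "phi q \<in> B'" using phq[OF pB(1-3)] KM pB(4) by simp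
      have BB': "B \<subseteq> B'" using Nch[OF BN pB(1)] qB' nB by blast
      have yq: "v (y - phi q) \<in> UB B'" using UBin[of y B' "phi q"] y BB' qB' by blast
      fix y' assume y': "y' \<in> Kb A n v p' (UB B)"
      have "\<forall>i<n. y' i \<in> A i \<and> v (y' i - p i) \<in> UB B'"
      proof (intro allI impI conjI)
        fix i assume i: "i < n"
        show "y' i \<in> A i" using y' memK i by blast
        have a: "v (y' i - p' i) \<in> UB B'" using y' memK i UBmono[OF BB'] by blast
        have "v (d i) \<in> UB B'" using d(3) i yq upUB unfolding upclosed_def by blast
        hence b: "v (p' i - q i) \<in> UB B'" by (simp add: p'_def)
        have c: "v (y' i - q i) \<in> UB B'" by (rule up_min[OF upUB a b vg_tri])
        have e: "v (q i - p i) \<in> UB B'" using q KM pB(4) memK i by blast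
        show "v (y' i - p i) \<in> UB B'" by (rule up_min[OF upUB c e vg_tri])
      qed
      thus "y' \<in> K" using pB(4) memK by blast
    qed
    have "Kb A n v p' (UB B) \<in> M" by (rule maxchain_ext[OF M K'F]) (use K'sub in blast)
    hence "phi q \<in> B" using phq[OF BN p'A] php' y by simp
    thus False using nB by simp
  qed
  thus "\<Inter>\<N> \<noteq> {}" using Nne by blast
qed

end

theorem theorem65:
  fixes v :: "'a::ab_group_add \<Rightarrow> 'g::{linorder,order_top}"
    and A :: "nat \<Rightarrow> 'a set" and n :: nat
  assumes "valued_group v"
    and "\<forall>i<n. ab_subgroup (A i)"
    and "\<forall>i<n. spherically_complete v (A i)"
    and "pseudo_direct v A n"
  shows "spherically_complete v (sum_sets A n) \<and>
         (\<forall>z. \<exists>y0\<in>sum_sets A n. \<forall>y\<in>sum_sets A n. v (z - y) \<le> v (z - y0))"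
proof -
  have 1: "spherically_complete v (sum_sets A n)" by (rule main_sc[OF assms])
  have 2: "ab_subgroup (sum_sets A n)" by (rule sum_sets_sub[OF assms(1,2)])
  show ?thesis using 1 opt_approx[OF assms(1) 2 1] by blast
qed

end
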